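(* Let $X=V(f)\subset\mathbb{P}^n$, $f=\sum_{u\in\mathcal{A}}c_ux^u$, be an irreducible hypersurface, not a cone, with $\operatorname{trop}(X)$ smooth. Let $P$ be a cell of $\operatorname{trop}(X)$, let $\widehat P$ be the corresponding cell of $\operatorname{trop}(\widehat X)$, and let $\mathcal{A}_0=\mathcal{A}(p)$ for $p$ in the relative interior of $\widehat P$. Let $u\in\mathcal{A}\setminus\mathcal{A}_0$ be such that $\{u\}\cup\mathcal{A}_0$ spans a simplex of the triangulation, and let $Q$ be the corresponding facet of $P$, namely the intersection of the affine span of $P$ with the image in $\mathbb{R}^{n+1}/\mathbb{R}(1,\dots,1)$ of $\{q\in\mathbb{R}^{n+1}:\nu(c_u)-\langle q,u\rangle=\nu(c_v)-\langle q,v\rangle\}$ for $v\in\mathcal{A}_0$. Then for any $v\in\mathcal{A}_0$ and any $q$ in the affine span of $\widehat P$, $$\delta_Q(q)=\phi_q(u)-\phi_q(v),$$ where $\phi_q(w)=\nu(c_w)-\langle q,w\rangle$ and $\delta_Q(q)$ denotes the lattice distance from (the image of) $q$ to $Q$.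
   Context: $\mathbb{K}$ algebraically closed of characteristic zero with nontrivial non-Archimedean valuation $\nu$ trivial on integers. $\mathcal{A}\subset\mathbb{Z}^{n+1}$, $c_u\neq0$, $f$ homogeneous involving all variables. For $q\in\mathbb{R}^{n+1}$, $\mathcal{A}(q)$ is the set of $w\in\mathcal{A}$ minimizing $\nu(c_w)-\langle q,w\rangle$; $\operatorname{trop}(\widehat X)=\{q:\#\mathcal{A}(q)>1\}$, with cells determined by the value of $\mathcal{A}(q)$ (dual to the regular subdivision of $\operatorname{conv}\mathcal{A}$ given by the sets $\operatorname{conv}\mathcal{A}(q)$); $\operatorname{trop}(X)$ is its image in $\mathbb{R}^{n+1}/\mathbb{R}(1,\dots,1)\cong\mathbb{R}^n$ with the induced cells. Smooth: the subdivision is a unimodular triangulation. Lattice distance: for a rational polyhedron $P$ with facet $Q$, $v_Q$ is the primitive inward normal (primitive integral functional on the direction lattice of the affine span of $P$, vanishing on the directions of $Q$, positive towards $P$), and $\delta_Q(q)=\langle q-q',v_Q\rangle$ for any $q'\in Q$; it extends to the affine span of $P$. *)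

theory Defs
  imports "HOL-Analysis.Analysis" "HOL-Computational_Algebra.Polynomial"
begin

text \<open>A polynomial f = sum of c_u x^u is represented by its coefficient function
  c on exponent vectors; its support is the set A.\<close>

definition supp :: "('a \<Rightarrow> 'k::zero) \<Rightarrow> 'a set" where
  "supp c = {w. c w \<noteq> 0}"

definition homogeneous_poly :: "(nat^'i \<Rightarrow> 'k::zero) \<Rightarrow> bool" where
  "homogeneous_poly c \<longleftrightarrow> (\<exists>d. \<forall>w\<in>supp c. (\<Sum>i\<in>UNIV. w$i) = d)"

definition involves_all_vars :: "(nat^'i \<Rightarrow> 'k::zero) \<Rightarrow> bool" where
  "involves_all_vars c \<longleftrightarrow> (\<forall>i. \<exists>w\<in>supp c. w$i \<noteq> 0)"

definition pmult :: "(nat^'i \<Rightarrow> 'k::comm_ring_1) \<Rightarrow> (nat^'i \<Rightarrow> 'k) \<Rightarrow> nat^'i \<Rightarrow> 'k" where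
  "pmult g h w = (\<Sum>ab\<in>{(a, b). a + b = w}. g (fst ab) * h (snd ab))"

definition is_const_poly :: "(nat^'i \<Rightarrow> 'k::zero) \<Rightarrow> bool" where
  "is_const_poly g \<longleftrightarrow> supp g \<subseteq> {0}"

definition irreducible_mpoly :: "(nat^'i \<Rightarrow> 'k::comm_ring_1) \<Rightarrow> bool" where
  "irreducible_mpoly f \<longleftrightarrow> finite (supp f) \<and> \<not> is_const_poly f \<and>
     (\<forall>g h. finite (supp g) \<and> finite (supp h) \<and> f = pmult g h
        \<longrightarrow> is_const_poly g \<or> is_const_poly h)"

definition peval :: "(nat^'i::finite \<Rightarrow> 'k::comm_ring_1) \<Rightarrow> 'k^'i \<Rightarrow> 'k" where
  "peval f x = (\<Sum>w\<in>supp f. f w * (\<Prod>i\<in>UNIV. (x$i) ^ (w$i)))"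

text \<open>X = V(f) is a cone (with vertex [p]) if every line through [p] and a point of X
  lies in X; on the affine cone: f(x) = 0 implies f(x + t p) = 0 for all t.\<close>
definition is_cone :: "(nat^'i::finite \<Rightarrow> 'k::field) \<Rightarrow> bool" where
  "is_cone f \<longleftrightarrow> (\<exists>p::'k^'i. p \<noteq> 0 \<and>
      (\<forall>x. peval f x = 0 \<longrightarrow> (\<forall>t. peval f (x + t *s p) = 0)))"

definition nonarch_valuation :: "('k::field_char_0 \<Rightarrow> real) \<Rightarrow> bool" where
  "nonarch_valuation \<nu> \<longleftrightarrow>
     (\<forall>x y. x \<noteq> 0 \<and> y \<noteq> 0 \<longrightarrow> \<nu> (x * y) = \<nu> x + \<nu> y) \<and>
     (\<forall>x y. x \<noteq> 0 \<and> y \<noteq> 0 \<and> x + y \<noteq> 0 \<longrightarrow> min (\<nu> x) (\<nu> y) \<le> \<nu> (x + y)) \<and>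
     (\<exists>x. x \<noteq> 0 \<and> \<nu> x \<noteq> 0) \<and>
     (\<forall>k::int. k \<noteq> 0 \<longrightarrow> \<nu> (of_int k) = 0)"

definition rvec :: "nat^'i \<Rightarrow> real^'i" where
  "rvec w = (\<chi> i. real (w$i))"

definition phi :: "('k \<Rightarrow> real) \<Rightarrow> (nat^'i::finite \<Rightarrow> 'k) \<Rightarrow> real^'i \<Rightarrow> nat^'i \<Rightarrow> real" where
  "phi \<nu> c q w = \<nu> (c w) - q \<bullet> rvec w"

definition Amin :: "('k::zero \<Rightarrow> real) \<Rightarrow> (nat^'i::finite \<Rightarrow> 'k) \<Rightarrow> real^'i \<Rightarrow> (nat^'i) set" where
  "Amin \<nu> c q = {w\<in>supp c. \<forall>w'\<in>supp c. phi \<nu> c q w \<le> phi \<nu> c q w'}"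

definition trop_hat :: "('k::zero \<Rightarrow> real) \<Rightarrow> (nat^'i::finite \<Rightarrow> 'k) \<Rightarrow> (real^'i) set" where
  "trop_hat \<nu> c = {q. card (Amin \<nu> c q) > 1}"

definition trop_hat_cell :: "('k::zero \<Rightarrow> real) \<Rightarrow> (nat^'i::finite \<Rightarrow> 'k) \<Rightarrow> (real^'i) set \<Rightarrow> bool" where
  "trop_hat_cell \<nu> c C \<longleftrightarrow> (\<exists>S. card S > 1 \<and> {q. Amin \<nu> c q = S} \<noteq> {} \<and>
      C = closure {q. Amin \<nu> c q = S})"

text \<open>The identification R^{n+1}/R(1,...,1) = R^n, coordinates indexed by 'n option
  (None being the 0-th coordinate).\<close>
definition proj :: "real^('n::finite option) \<Rightarrow> real^'n" where
  "proj x = (\<chi> i. x$(Some i) - x$None)"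

definition int_vecs :: "(real^'m) set" where
  "int_vecs = {x. \<forall>i. x$i \<in> \<int>}"

definition int_comb :: "(real^'m) set \<Rightarrow> (real^'m) set" where
  "int_comb S = {x. \<exists>a::real^'m \<Rightarrow> int. x = (\<Sum>s\<in>S. of_int (a s) *\<^sub>R s)}"

definition dir_lattice :: "(real^'m) set \<Rightarrow> (real^'m) set" where
  "dir_lattice P = span {a - b | a b. a \<in> P \<and> b \<in> P} \<inter> int_vecs"

definition primitive_inward_normal ::
  "(real^'m) set \<Rightarrow> (real^'m) set \<Rightarrow> (real^'m \<Rightarrow> real) \<Rightarrow> bool" where
  "primitive_inward_normal P Q l \<longleftrightarrow> linear l \<and>
     (\<forall>x\<in>dir_lattice P. l x \<in> \<int>) \<and> (\<exists>x\<in>dir_lattice P. l x = 1) \<and>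
     (\<forall>x\<in>Q. \<forall>y\<in>Q. l (x - y) = 0) \<and>
     (\<forall>x\<in>P. \<forall>y\<in>Q. 0 \<le> l (x - y)) \<and> (\<exists>x\<in>P. \<exists>y\<in>Q. 0 < l (x - y))"

definition lattice_dist :: "(real^'m) set \<Rightarrow> (real^'m) set \<Rightarrow> real^'m \<Rightarrow> real" where
  "lattice_dist P Q x =
     (THE d. \<exists>l. primitive_inward_normal P Q l \<and> (\<forall>y\<in>Q. d = l (x - y)))"

section \<open>Smoothness: the regular subdivision is a unimodular triangulation\<close>

definition smooth_trop :: "('k::zero \<Rightarrow> real) \<Rightarrow> (nat^'i::finite \<Rightarrow> 'k) \<Rightarrow> bool" where
  "smooth_trop \<nu> c \<longleftrightarrow>
     (\<forall>q. \<not> affine_dependent (rvec ` Amin \<nu> c q)) \<and>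
     (\<forall>q. \<forall>w0\<in>Amin \<nu> c q.
        affine hull (rvec ` Amin \<nu> c q) = affine hull (rvec ` supp c) \<longrightarrow>
        span {a - b | a b. a \<in> rvec ` supp c \<and> b \<in> rvec ` supp c} \<inter> int_vecs
          \<subseteq> int_comb ((\<lambda>w. rvec w - rvec w0) ` Amin \<nu> c q))"

end

theory Submission
  imports Defs
begin


lemma int_vecs_iff: "x \<in> int_vecs \<longleftrightarrow> (\<forall>i. x $ i \<in> \<int>)"
  by (simp add: int_vecs_def)

lemma int_vecs_diff: "x \<in> int_vecs \<Longrightarrow> y \<in> int_vecs \<Longrightarrow> x - y \<in> int_vecs"
  by (simp add: int_vecs_iff)

lemma int_vecs_add: "x \<in> int_vecs \<Longrightarrow> y \<in> int_vecs \<Longrightarrow> x + y \<in> int_vecs"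
  by (simp add: int_vecs_iff)

lemma int_vecs_scale: "k \<in> \<int> \<Longrightarrow> x \<in> int_vecs \<Longrightarrow> k *\<^sub>R x \<in> int_vecs"
  by (simp add: int_vecs_iff)

lemma int_vecs_sum: "(\<And>s. s \<in> S \<Longrightarrow> f s \<in> int_vecs) \<Longrightarrow> sum f S \<in> int_vecs"
  by (auto simp: int_vecs_iff sum_component intro!: Ints_sum)

lemma int_vecs_inner: "x \<in> int_vecs \<Longrightarrow> y \<in> int_vecs \<Longrightarrow> x \<bullet> y \<in> \<int>"
  by (auto simp: int_vecs_iff inner_vec_def intro!: Ints_sum Ints_mult)

lemma int_vecs_axis: "axis i (1::real) \<in> int_vecs"
  by (simp add: int_vecs_iff axis_def)

lemma bezout_vec:
  fixes c :: "real^'m"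
  assumes cI: "c \<in> int_vecs" and prim: "\<forall>g::int. g \<ge> 2 \<longrightarrow> (1 / of_int g) *\<^sub>R c \<notin> int_vecs"
  shows "\<exists>z\<in>int_vecs. z \<bullet> c = 1"
proof -
  define I where "I = {k::int. \<exists>z\<in>int_vecs. z \<bullet> c = of_int k}"
  have Isub: "k1 - m * k2 \<in> I" if h1: "k1 \<in> I" and h2: "k2 \<in> I" for k1 k2 m
  proof -
    obtain z1 where "z1 \<in> int_vecs" "z1 \<bullet> c = of_int k1" using h1 unfolding I_def by auto
    moreover obtain z2 where "z2 \<in> int_vecs" "z2 \<bullet> c = of_int k2" using h2 unfolding I_def by auto
    ultimately show ?thesis unfolding I_def
      by (auto intro!: bexI[of _ "z1 - of_int m *\<^sub>R z2"] int_vecs_diff int_vecs_scale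
               simp: inner_diff_left)
  qed
  have comp: "\<exists>k. c $ i = of_int k \<and> k \<in> I" for i
  proof -
    obtain k where k: "c $ i = of_int k" using cI unfolding int_vecs_iff by (meson Ints_cases)
    have "axis i 1 \<bullet> c = c $ i" by (simp add: cart_eq_inner_axis inner_commute)
    then have "k \<in> I" unfolding I_def using k int_vecs_axis by auto
    with k show ?thesis by auto
  qed
  have "c \<noteq> 0"
  proof
    assume "c = 0"
    then have "(1 / of_int 2) *\<^sub>R c \<in> int_vecs" by (simp add: int_vecs_iff)
    with prim show False by auto
  qed
  then obtain i where "c $ i \<noteq> 0" by (auto simp: vec_eq_iff)
  with comp obtain k where k: "c $ i = of_int k" "k \<in> I" by blast
  have I0: "0 \<in> I" unfolding I_def by (auto intro!: bexI[of _ 0] simp: int_vecs_iff)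
  have "- k \<in> I" if "k \<in> I" for k using Isub[OF I0 that, of 1] by simp
  then have "\<bar>k\<bar> \<in> I" using k by (cases "k \<ge> 0") auto
  moreover have "\<bar>k\<bar> > 0" using k \<open>c $ i \<noteq> 0\<close> by auto
  ultimately have ex: "\<exists>n::nat. n > 0 \<and> int n \<in> I"
    by (intro exI[of _ "nat \<bar>k\<bar>"]) auto
  define m where "m = (LEAST n::nat. n > 0 \<and> int n \<in> I)"
  have m: "m > 0" "int m \<in> I" using LeastI_ex[OF ex] unfolding m_def by auto
  have mmin: "\<not> (n > 0 \<and> int n \<in> I)" if "n < m" for n
    using not_less_Least[of n "\<lambda>n. n > 0 \<and> int n \<in> I"] that unfolding m_def by blast
  have dv: "int m dvd k" if "k \<in> I" for k
  proof -
    have "k - (k div int m) * int m \<in> I" using Isub[OF that m(2)] .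
    moreover have "k - (k div int m) * int m = k mod int m" by (simp add: minus_div_mult_eq_mod)
    ultimately have r: "k mod int m \<in> I" by simp
    have "k mod int m \<ge> 0" "k mod int m < int m" using m(1) by auto
    then have "k mod int m = 0" using mmin[of "nat (k mod int m)"] r
      by (metis int_nat_eq nat_less_iff of_nat_0_less_iff order_le_less)
    then show ?thesis by auto
  qed
  have "(1 / of_int (int m)) *\<^sub>R c \<in> int_vecs"
    unfolding int_vecs_iff
  proof
    fix j
    obtain kj where kj: "c $ j = of_int kj" "kj \<in> I" using comp by blast
    then obtain t where t: "kj = int m * t" using dv by (auto elim: dvdE)
    have "((1 / of_int (int m)) *\<^sub>R c) $ j = of_int t" using kj t m(1) by simp
    then show "((1 / of_int (int m)) *\<^sub>R c) $ j \<in> \<int>" by simp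
  qed
  with prim have "\<not> int m \<ge> 2" by blast
  then have "m = 1" using m(1) by simp
  with m(2) show ?thesis unfolding I_def by auto
qed



lemma indep_coeff_unique:
  fixes B :: "(real^'m) set"
  assumes "finite B" "independent B"
    and eq: "(\<Sum>s\<in>B. f s *\<^sub>R s) = (\<Sum>s\<in>B. g s *\<^sub>R s)" and "s \<in> B"
  shows "f s = g s"
proof -
  have e: "(\<Sum>s\<in>B. (f s - g s) *\<^sub>R s) = 0"
    using eq by (simp add: scaleR_diff_left sum_subtractf)
  have "(\<lambda>s. f s - g s) s = 0"
    using iffD1[OF real_vector.independent_explicit_module assms(2), rule_format, OF assms(1) subset_refl e assms(4)] .
  then show ?thesis by simp
qed

lemma sum_remove_real:
  "finite B \<Longrightarrow> b \<in> B \<Longrightarrow> (\<Sum>s\<in>B. f s) = f b + (\<Sum>s\<in>B - {b}. f s)"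
  by (simp add: sum.remove)

lemma dual_basis:
  fixes B :: "(real^'m) set"
  assumes "finite B" "independent B" "B \<subseteq> int_vecs" "span B \<inter> int_vecs \<subseteq> int_comb B"
    and "b \<in> B"
  shows "\<exists>z\<in>int_vecs. z \<bullet> b = 1 \<and> (\<forall>b'\<in>B - {b}. z \<bullet> b' = 0)"
  using assms
proof (induction "card B" arbitrary: B b rule: less_induct)
  case less
  define B' where "B' = B - {b}"
  have finB': "finite B'" using less.prems B'_def by auto
  have indB': "independent B'" using less.prems B'_def
    by (meson Diff_subset real_vector.independent_mono)
  have intB': "B' \<subseteq> int_vecs" using less.prems B'_def by auto
  have cardB': "card B' < card B" by (metis B'_def card_Diff1_less less.prems(1) less.prems(5))
  have satB': "span B' \<inter> int_vecs \<subseteq> int_comb B'"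
  proof
    fix x assume x: "x \<in> span B' \<inter> int_vecs"
    have "span B' \<subseteq> span B" using B'_def by (simp add: span_mono)
    with x less.prems(4) have "x \<in> int_comb B" by auto
    then obtain a where a: "x = (\<Sum>s\<in>B. of_int (a s) *\<^sub>R s)" unfolding int_comb_def by auto
    from x obtain r where r: "x = (\<Sum>s\<in>B'. r s *\<^sub>R s)"
      using real_vector.span_finite[OF finB'] by auto
    define r' where "r' s = (if s = b then 0 else r s)" for s
    have "(\<Sum>s\<in>B. r' s *\<^sub>R s) = (\<Sum>s\<in>B'. r' s *\<^sub>R s)"
      using sum_remove_real[OF less.prems(1) less.prems(5), of "\<lambda>s. r' s *\<^sub>R s"] B'_def r'_def
      by simp
    also have "\<dots> = (\<Sum>s\<in>B'. r s *\<^sub>R s)" using B'_def r'_def by (intro sum.cong) auto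
    finally have "(\<Sum>s\<in>B. of_int (a s) *\<^sub>R s) = (\<Sum>s\<in>B. r' s *\<^sub>R s)" using a r by simp
    from indep_coeff_unique[OF less.prems(1) less.prems(2) this less.prems(5)]
    have "a b = 0" using r'_def by simp
    then have "x = (\<Sum>s\<in>B'. of_int (a s) *\<^sub>R s)"
      using a sum_remove_real[OF less.prems(1) less.prems(5), of "\<lambda>s. of_int (a s) *\<^sub>R s"] B'_def
      by simp
    then show "x \<in> int_comb B'" unfolding int_comb_def by auto
  qed
  have "\<forall>b'\<in>B'. \<exists>z. z \<in> int_vecs \<and> z \<bullet> b' = 1 \<and> (\<forall>b''\<in>B' - {b'}. z \<bullet> b'' = 0)"
    using less.hyps[OF cardB' finB' indB' intB' satB'] unfolding Bex_def by blast
  from bchoice[OF this] obtain zf where zf0: "\<forall>b'\<in>B'. zf b' \<in> int_vecs \<and> zf b' \<bullet> b' = 1 \<and>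
      (\<forall>b''\<in>B' - {b'}. zf b' \<bullet> b'' = 0)" by blast
  have zf: "zf b' \<in> int_vecs \<and> zf b' \<bullet> b' = 1 \<and> (\<forall>b''\<in>B' - {b'}. zf b' \<bullet> b'' = 0)"
    if "b' \<in> B'" for b' using zf0 that by blast
  define c where "c = b - (\<Sum>b'\<in>B'. (zf b' \<bullet> b) *\<^sub>R b')"
  have bI: "b \<in> int_vecs" using less.prems by auto
  have cI: "c \<in> int_vecs" unfolding c_def
    using zf intB' bI
    by (intro int_vecs_diff bI int_vecs_sum int_vecs_scale int_vecs_inner) auto
  have prim: "\<forall>g::int. g \<ge> 2 \<longrightarrow> (1 / of_int g) *\<^sub>R c \<notin> int_vecs"
  proof (intro allI impI notI)
    fix g :: int assume g: "g \<ge> 2" and y: "(1 / of_int g) *\<^sub>R c \<in> int_vecs"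
    have "b \<in> span B" using less.prems by (simp add: span_base)
    moreover have "B' \<subseteq> span B" using B'_def by (auto intro: span_base)
    ultimately have "c \<in> span B" unfolding c_def
      by (intro span_diff span_sum span_scale) auto
    then have "(1 / of_int g) *\<^sub>R c \<in> span B" by (intro span_scale)
    with y less.prems(4) have "(1 / of_int g) *\<^sub>R c \<in> int_comb B" by auto
    then obtain a where a: "(1 / of_int g) *\<^sub>R c = (\<Sum>s\<in>B. of_int (a s) *\<^sub>R s)"
      unfolding int_comb_def by auto
    define h where "h s = (if s = b then 1 / of_int g else - (1 / of_int g) * (zf s \<bullet> b))" for s
    have "(\<Sum>s\<in>B. h s *\<^sub>R s) = h b *\<^sub>R b + (\<Sum>s\<in>B'. h s *\<^sub>R s)"
      using sum_remove_real[OF less.prems(1) less.prems(5)] B'_def by blast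
    also have "(\<Sum>s\<in>B'. h s *\<^sub>R s) = (\<Sum>s\<in>B'. (- (1 / of_int g)) *\<^sub>R ((zf s \<bullet> b) *\<^sub>R s))"
      using B'_def h_def by (intro sum.cong) auto
    also have "\<dots> = (- (1 / of_int g)) *\<^sub>R (\<Sum>s\<in>B'. (zf s \<bullet> b) *\<^sub>R s)"
      by (simp add: scaleR_sum_right)
    finally have "(\<Sum>s\<in>B. h s *\<^sub>R s) = (1 / of_int g) *\<^sub>R c"
      unfolding c_def h_def by (simp add: scaleR_diff_right)
    with a have "(\<Sum>s\<in>B. of_int (a s) *\<^sub>R s) = (\<Sum>s\<in>B. h s *\<^sub>R s)" by simp
    from indep_coeff_unique[OF less.prems(1) less.prems(2) this less.prems(5)]
    have ab: "of_int (a b) = 1 / (of_int g :: real)" using h_def by simp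
    have "0 < (1 / (of_int g :: real))" "1 / (of_int g :: real) < 1" using g by auto
    with ab have "0 < a b" "a b < 1" by (metis of_int_0_less_iff, metis of_int_less_1_iff)
    then show False by simp
  qed
  obtain z0 where z0: "z0 \<in> int_vecs" "z0 \<bullet> c = 1" using bezout_vec[OF cI prim] by blast
  define z where "z = z0 - (\<Sum>b'\<in>B'. (z0 \<bullet> b') *\<^sub>R zf b')"
  have zI: "z \<in> int_vecs" unfolding z_def using zf intB' z0
    by (intro int_vecs_diff int_vecs_sum int_vecs_scale int_vecs_inner) auto
  have zb: "z \<bullet> b = 1"
  proof -
    have "z \<bullet> b = z0 \<bullet> b - (\<Sum>b'\<in>B'. (z0 \<bullet> b') * (zf b' \<bullet> b))"
      unfolding z_def by (simp add: inner_diff_left inner_sum_left)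
    also have "\<dots> = z0 \<bullet> c"
      unfolding c_def by (simp add: inner_diff_right inner_sum_right mult.commute)
    finally show ?thesis using z0 by simp
  qed
  have zb': "z \<bullet> b'' = 0" if b'': "b'' \<in> B'" for b''
  proof -
    have "(\<Sum>b'\<in>B'. (z0 \<bullet> b') * (zf b' \<bullet> b'')) =
        (z0 \<bullet> b'') * (zf b'' \<bullet> b'') + (\<Sum>b'\<in>B' - {b''}. (z0 \<bullet> b') * (zf b' \<bullet> b''))"
      using sum_remove_real[OF finB' b''] by blast
    also have "(\<Sum>b'\<in>B' - {b''}. (z0 \<bullet> b') * (zf b' \<bullet> b'')) = 0"
      using zf b'' by (intro sum.neutral) (auto simp: inner_commute)
    finally have s: "(\<Sum>b'\<in>B'. (z0 \<bullet> b') * (zf b' \<bullet> b'')) = z0 \<bullet> b''"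
      using zf[OF b''] by simp
    have "z \<bullet> b'' = z0 \<bullet> b'' - (\<Sum>b'\<in>B'. (z0 \<bullet> b') * (zf b' \<bullet> b''))"
      unfolding z_def by (simp add: inner_diff_left inner_sum_left)
    then show ?thesis using s by simp
  qed
  show ?case using zI zb zb' B'_def by auto
qed



lemma Amin_iff: "w \<in> Amin \<nu> c q \<longleftrightarrow> w \<in> supp c \<and> (\<forall>w'\<in>supp c. phi \<nu> c q w \<le> phi \<nu> c q w')"
  by (simp add: Amin_def)

lemma Amin_sub: "Amin \<nu> c q \<subseteq> supp c"
  by (auto simp: Amin_def)

lemma Amin_eqI: "w0 \<in> Amin \<nu> c q \<Longrightarrow> w \<in> supp c \<Longrightarrow> phi \<nu> c q w = phi \<nu> c q w0 \<Longrightarrow> w \<in> Amin \<nu> c q"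
  by (simp add: Amin_def)

lemma Amin_phi_eq: "w \<in> Amin \<nu> c q \<Longrightarrow> w' \<in> Amin \<nu> c q \<Longrightarrow> phi \<nu> c q w = phi \<nu> c q w'"
  by (auto simp: Amin_def intro: antisym)

lemma phi_shift: "phi \<nu> c (q + t *\<^sub>R z) w = phi \<nu> c q w - t * (z \<bullet> rvec w)"
  by (simp add: phi_def inner_add_left)

lemma exists_max_cell:
  assumes fin: "finite (supp c)" and w0: "w0 \<in> Amin \<nu> c q"
  shows "\<exists>q'. Amin \<nu> c q \<subseteq> Amin \<nu> c q' \<and>
     affine hull (rvec ` Amin \<nu> c q') = affine hull (rvec ` supp c)"
  using w0
proof (induction "card (supp c) - card (Amin \<nu> c q)" arbitrary: q rule: less_induct)
  case less
  show ?case
  proof (cases "affine hull (rvec ` Amin \<nu> c q) = affine hull (rvec ` supp c)")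
    case True then show ?thesis by blast
  next
    case False
    define S where "S = {x - rvec w0 |x. x \<in> rvec ` Amin \<nu> c q - {rvec w0}}"
    have ex: "\<exists>w1\<in>supp c. rvec w1 - rvec w0 \<notin> span S"
    proof (rule ccontr)
      assume "\<not> ?thesis"
      then have h: "\<forall>w1\<in>supp c. rvec w1 - rvec w0 \<in> span S" by blast
      have ah: "affine hull (rvec ` Amin \<nu> c q) = {rvec w0 + v |v. v \<in> span S}"
        unfolding S_def using less.prems by (intro affine_hull_span) auto
      have "rvec ` supp c \<subseteq> affine hull (rvec ` Amin \<nu> c q)"
      proof
        fix x assume "x \<in> rvec ` supp c"
        then obtain w1 where "w1 \<in> supp c" "x = rvec w1" by auto
        then show "x \<in> affine hull (rvec ` Amin \<nu> c q)"
          unfolding ah using h by (auto intro!: exI[of _ "rvec w1 - rvec w0"])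
      qed
      then have "affine hull (rvec ` supp c) \<subseteq> affine hull (rvec ` Amin \<nu> c q)"
        by (intro hull_minimal) (auto simp: affine_affine_hull)
      moreover have "affine hull (rvec ` Amin \<nu> c q) \<subseteq> affine hull (rvec ` supp c)"
        using Amin_sub by (intro hull_mono image_mono) 
      ultimately show False using False by blast
    qed
    then obtain w1 where w1: "w1 \<in> supp c" "rvec w1 - rvec w0 \<notin> span S" by blast
    obtain y z where yz: "y \<in> span S" "\<And>w. w \<in> span S \<Longrightarrow> orthogonal z w"
        "rvec w1 - rvec w0 = y + z"
      by (rule orthogonal_subspace_decomp_exists[of S "rvec w1 - rvec w0"]) blast
    have "z \<noteq> 0" using yz w1 by auto
    have zy: "z \<bullet> y = 0" using yz(2)[OF yz(1)] by (simp add: orthogonal_def)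
    have rho1: "z \<bullet> (rvec w1 - rvec w0) > 0"
      using yz(3) zy \<open>z \<noteq> 0\<close> by (simp add: inner_add_right)
    have rho0: "z \<bullet> (rvec w - rvec w0) = 0" if "w \<in> Amin \<nu> c q" for w
    proof (cases "rvec w = rvec w0")
      case True then show ?thesis by simp
    next
      case False
      then have "rvec w - rvec w0 \<in> S" unfolding S_def using that by auto
      then show ?thesis using yz(2) span_base by (auto simp: orthogonal_def)
    qed
    define rho where "rho w = z \<bullet> (rvec w - rvec w0)" for w
    define D where "D w = phi \<nu> c q w - phi \<nu> c q w0" for w
    define T where "T = {w\<in>supp c. rho w > 0}"
    have finT: "finite T" using fin T_def by auto
    have w1T: "w1 \<in> T" using w1 rho1 T_def rho_def by auto
    define t where "t = Min ((\<lambda>w. D w / rho w) ` T)"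
    have Dnn: "D w \<ge> 0" if "w \<in> supp c" for w
      using less.prems that unfolding D_def Amin_def by auto
    have tle: "t \<le> D w / rho w" if "w \<in> T" for w
      unfolding t_def using finT that by (intro Min_le) auto
    obtain ws where ws: "ws \<in> T" "t = D ws / rho ws"
      unfolding t_def using finT w1T Min_in[of "(\<lambda>w. D w / rho w) ` T"] by fastforce
    have t0: "t \<ge> 0" using ws Dnn T_def by auto
    define q' where "q' = q + t *\<^sub>R z"
    have key: "phi \<nu> c q' w - phi \<nu> c q' w0 = D w - t * rho w" for w
      unfolding q'_def phi_shift D_def rho_def by (simp add: inner_diff_right algebra_simps)
    have ge: "phi \<nu> c q' w0 \<le> phi \<nu> c q' w" if "w \<in> supp c" for w
    proof (cases "rho w > 0")
      case True
      then have "w \<in> T" using that T_def by auto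
      then have "t * rho w \<le> D w" using tle[of w] True by (simp add: pos_le_divide_eq)
      then show ?thesis using key[of w] by simp
    next
      case False
      then have "t * rho w \<le> 0" using t0 by (simp add: mult_nonneg_nonpos)
      then show ?thesis using key[of w] Dnn[OF that] by simp
    qed
    have w0q': "w0 \<in> Amin \<nu> c q'" using ge less.prems Amin_sub unfolding Amin_def by auto
    have sub: "Amin \<nu> c q \<subseteq> Amin \<nu> c q'"
    proof
      fix w assume w: "w \<in> Amin \<nu> c q"
      have "D w = 0" unfolding D_def using Amin_phi_eq[OF w less.prems] by simp
      moreover have "rho w = 0" using rho0[OF w] rho_def by simp
      ultimately have "phi \<nu> c q' w = phi \<nu> c q' w0" using key[of w] by simp
      then show "w \<in> Amin \<nu> c q'" using Amin_eqI[OF w0q'] w Amin_sub by blast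
    qed
    have wsq': "ws \<in> Amin \<nu> c q'"
    proof -
      have "rho ws > 0" using ws T_def by auto
      then have "D ws - t * rho ws = 0" using ws by simp
      then show ?thesis using key[of ws] Amin_eqI[OF w0q'] ws T_def by auto
    qed
    have wsq: "ws \<notin> Amin \<nu> c q" using rho0 ws T_def rho_def by force
    have "card (Amin \<nu> c q) < card (Amin \<nu> c q')"
    proof (rule psubset_card_mono)
      show "finite (Amin \<nu> c q')" using fin Amin_sub rev_finite_subset by metis
      show "Amin \<nu> c q \<subset> Amin \<nu> c q'" using sub wsq wsq' by blast
    qed
    moreover have "card (Amin \<nu> c q') \<le> card (supp c)"
      using fin Amin_sub by (intro card_mono) auto
    ultimately have "card (supp c) - card (Amin \<nu> c q') < card (supp c) - card (Amin \<nu> c q)"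
      by linarith
    from less.hyps[OF this w0q'] sub show ?thesis by blast
  qed
qed



lemma proj_add: "proj (x + y) = proj x + proj y" by (simp add: proj_def vec_eq_iff)
lemma proj_diff: "proj (x - y) = proj x - proj y" by (simp add: proj_def vec_eq_iff)
lemma proj_scale: "proj (a *\<^sub>R x) = a *\<^sub>R proj x" by (simp add: proj_def vec_eq_iff algebra_simps)
lemma linear_proj: "linear proj" by (rule linearI) (simp_all add: proj_add proj_scale)
lemma proj_int: "x \<in> int_vecs \<Longrightarrow> proj x \<in> int_vecs" by (simp add: int_vecs_iff proj_def)

lemma sum_option: "(\<Sum>i\<in>(UNIV::'n::finite option set). g i) = g None + (\<Sum>i\<in>UNIV. g (Some i))"
proof -
  have "(\<Sum>i\<in>(UNIV::'n option set). g i) = (\<Sum>i\<in>insert None (range Some). g i)"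
    by (simp add: UNIV_option_conv)
  also have "\<dots> = g None + (\<Sum>i\<in>range Some. g i)" by (subst sum.insert) auto
  also have "(\<Sum>i\<in>range Some. g i) = (\<Sum>i\<in>UNIV. g (Some i))" by (subst sum.reindex) auto
  finally show ?thesis .
qed

lemma proj_inner:
  fixes x b :: "real^('n::finite option)"
  assumes "(\<Sum>i\<in>UNIV. b$i) = 0"
  shows "x \<bullet> b = proj x \<bullet> (\<chi> i. b $ Some i)"
proof -
  have s: "b$None = - (\<Sum>i\<in>UNIV. b$(Some i))" using assms sum_option[of "\<lambda>i. b$i"] by simp
  have "x \<bullet> b = x$None * b$None + (\<Sum>i\<in>UNIV. x$Some i * b$Some i)"
    by (simp add: inner_vec_def sum_option)
  moreover have "proj x \<bullet> (\<chi> i. b $ Some i) = (\<Sum>i\<in>UNIV. (x$Some i - x$None) * b$Some i)"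
    by (simp add: inner_vec_def proj_def)
  moreover have "\<dots> = (\<Sum>i\<in>UNIV. x$Some i * b$Some i) - x$None * (\<Sum>i\<in>UNIV. b$Some i)"
    by (simp add: left_diff_distrib sum_subtractf sum_distrib_left)
  ultimately show ?thesis using s by simp
qed

lemma rvec_inj: "rvec w = rvec w' \<Longrightarrow> w = w'"
  by (simp add: rvec_def vec_eq_iff)

lemma rvec_int: "rvec w \<in> int_vecs"
  by (simp add: rvec_def int_vecs_iff)

lemma phi_comb2: "a + b = 1 \<Longrightarrow> phi \<nu> c (a *\<^sub>R x + b *\<^sub>R y) w = a * phi \<nu> c x w + b * phi \<nu> c y w"
proof -
  assume "a + b = 1"
  then have b: "b = 1 - a" by simp
  show ?thesis unfolding b phi_def by (simp add: inner_add_left algebra_simps)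
qed

lemma phi_lin3: "phi \<nu> c (x + y - z) w = phi \<nu> c x w + phi \<nu> c y w - phi \<nu> c z w"
  by (simp add: phi_def inner_add_left inner_diff_left)

lemma Amin_gt: "s0 \<in> Amin \<nu> c q \<Longrightarrow> w \<in> supp c \<Longrightarrow> w \<notin> Amin \<nu> c q \<Longrightarrow> phi \<nu> c q s0 < phi \<nu> c q w"
  using Amin_eqI[of s0 \<nu> c q w] unfolding Amin_def by force

lemma comb_strict:
  fixes a b X X' Y Y' :: real
  assumes "X' < X" "Y' < Y" "0 \<le> a" "0 \<le> b" "a + b = 1"
  shows "a * X' + b * Y' < a * X + b * Y"
proof (cases "a = 0")
  case True
  then show ?thesis using assms by simp
next
  case False
  then have "a * X' < a * X" using assms by (simp add: mult_strict_left_mono)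
  moreover have "b * Y' \<le> b * Y" using assms by (simp add: mult_left_mono)
  ultimately show ?thesis by simp
qed

lemma stratum_convex:
  assumes "S \<noteq> {}"
  shows "convex {q. Amin \<nu> c q = S}"
  unfolding convex_def
proof (intro ballI allI impI)
  fix x y and a b :: real
  assume x: "x \<in> {q. Amin \<nu> c q = S}" and y: "y \<in> {q. Amin \<nu> c q = S}"
    and ab: "0 \<le> a" "0 \<le> b" "a + b = 1"
  define z where "z = a *\<^sub>R x + b *\<^sub>R y"
  have pz: "phi \<nu> c z w = a * phi \<nu> c x w + b * phi \<nu> c y w" for w
    unfolding z_def by (rule phi_comb2[OF ab(3)])
  have Sx: "Amin \<nu> c x = S" and Sy: "Amin \<nu> c y = S" using x y by auto
  obtain s0 where s0: "s0 \<in> S" using assms by auto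
  have "Amin \<nu> c z = S"
  proof
    show "S \<subseteq> Amin \<nu> c z"
    proof
      fix w assume w: "w \<in> S"
      have ws: "w \<in> supp c" using w Sx Amin_sub by blast
      have "phi \<nu> c z w \<le> phi \<nu> c z w'" if w': "w' \<in> supp c" for w'
      proof -
        have "phi \<nu> c x w \<le> phi \<nu> c x w'" using w w' Sx unfolding Amin_def by auto
        moreover have "phi \<nu> c y w \<le> phi \<nu> c y w'" using w w' Sy unfolding Amin_def by auto
        ultimately show ?thesis unfolding pz using ab
          by (simp add: add_mono mult_left_mono)
      qed
      then show "w \<in> Amin \<nu> c z" using ws unfolding Amin_def by auto
    qed
  next
    show "Amin \<nu> c z \<subseteq> S"
    proof (rule ccontr)
      assume "\<not> ?thesis"
      then obtain w where w: "w \<in> Amin \<nu> c z" "w \<notin> S" by auto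
      have ws: "w \<in> supp c" using w Amin_sub by blast
      have "phi \<nu> c x s0 < phi \<nu> c x w" using Amin_gt[of s0 \<nu> c x w] s0 Sx ws w by auto
      moreover have "phi \<nu> c y s0 < phi \<nu> c y w" using Amin_gt[of s0 \<nu> c y w] s0 Sy ws w by auto
      moreover have "s0 \<in> supp c" using s0 Sx Amin_sub by blast
      then have "phi \<nu> c z w \<le> phi \<nu> c z s0" using w unfolding Amin_def by auto
      ultimately show False unfolding pz using comb_strict[OF _ _ ab] by fastforce
    qed
  qed
  then show "a *\<^sub>R x + b *\<^sub>R y \<in> {q. Amin \<nu> c q = S}" using z_def by simp
qed

lemma int_comb_insert0:
  assumes "finite B"
  shows "int_comb (insert 0 B) \<subseteq> int_comb B"
proof (cases "0 \<in> B")
  case True then show ?thesis by (simp add: insert_absorb)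
next
  case False
  show ?thesis
  proof
    fix x assume "x \<in> int_comb (insert 0 B)"
    then obtain a where "x = (\<Sum>s\<in>insert 0 B. of_int (a s) *\<^sub>R s)" unfolding int_comb_def by auto
    also have "\<dots> = (\<Sum>s\<in>B. of_int (a s) *\<^sub>R s)" using assms False by simp
    finally show "x \<in> int_comb B" unfolding int_comb_def by auto
  qed
qed

 

theorem lemma5p3:
  fixes \<nu> :: "'k::{alg_closed_field, field_char_0} \<Rightarrow> real"
    and c :: "nat^('n::finite option) \<Rightarrow> 'k"
    and Phat :: "(real^('n option)) set"
    and p q :: "real^('n option)"
    and u v v' :: "nat^('n option)"
  assumes val: "nonarch_valuation \<nu>"
    and fin: "finite (supp c)"
    and hom: "homogeneous_poly c"
    and allvars: "involves_all_vars c"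
    and irred: "irreducible_mpoly c"
    and notcone: "\<not> is_cone c"
    and smooth: "smooth_trop \<nu> c"
    and cell: "trop_hat_cell \<nu> c Phat"
    and p_int: "p \<in> rel_interior Phat"
    and u_supp: "u \<in> supp c"
    and u_notin: "u \<notin> Amin \<nu> c p"
    and simplex: "\<exists>r. Amin \<nu> c r = insert u (Amin \<nu> c p)"
    and v': "v' \<in> Amin \<nu> c p"
    and v: "v \<in> Amin \<nu> c p"
    and q: "q \<in> affine hull Phat"
  shows "lattice_dist (proj ` Phat)
           (affine hull (proj ` Phat) \<inter> proj ` {r. phi \<nu> c r u = phi \<nu> c r v'})
           (proj q)
         = phi \<nu> c q u - phi \<nu> c q v"
proof -
  obtain S where S: "card S > 1" and Phat: "Phat = closure {q. Amin \<nu> c q = S}"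
    using cell unfolding trop_hat_cell_def by blast
  define C where "C = {q. Amin \<nu> c q = S}"
  have Sne: "S \<noteq> {}" using S by auto
  have convC: "convex C" unfolding C_def by (rule stratum_convex[OF Sne])
  have "p \<in> rel_interior C"
    using p_int Phat convex_rel_interior_closure[OF convC] C_def by simp
  then have pC: "p \<in> C" using rel_interior_subset by blast
  define A0 where "A0 = Amin \<nu> c p"
  have A0S: "A0 = S" using pC C_def A0_def by simp
  have CA0: "C = {q. Amin \<nu> c q = A0}" using A0S C_def by simp
  have PhatC: "Phat = closure C" using Phat C_def by simp
  have pPhat: "p \<in> Phat" using pC PhatC closure_subset by blast
  have A0supp: "A0 \<subseteq> supp c" using Amin_sub A0_def by blast
  have vA0: "v \<in> A0" and v'A0: "v' \<in> A0" and uA0: "u \<notin> A0" using v v' u_notin A0_def by auto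
  have vsupp: "v \<in> supp c" using vA0 A0supp by auto

  define L0 where "L0 = {q. \<forall>w\<in>A0. phi \<nu> c q w = phi \<nu> c q v}"
  have affL0: "affine L0"
    unfolding affine_def L0_def by (auto simp: phi_comb2)
  have lin3L0: "x + y - z \<in> L0" if "x \<in> L0" "y \<in> L0" "z \<in> L0" for x y z
    using that unfolding L0_def by (simp add: phi_lin3)
  have CL0: "C \<subseteq> L0" unfolding CA0 L0_def using vA0 Amin_phi_eq by blast
  have aff1: "affine hull Phat \<subseteq> L0"
  proof -
    have "affine hull C \<subseteq> L0" using CL0 affL0 by (intro hull_minimal) auto
    then have "Phat \<subseteq> L0" using PhatC closure_affine_hull by blast
    then show ?thesis using affL0 by (intro hull_minimal) auto
  qed
  have pL0: "p \<in> L0" using pC CL0 by blast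
  have aff2: "L0 \<subseteq> affine hull Phat"
  proof
    fix q1 assume q1: "q1 \<in> L0"
    define g where "g w t = phi \<nu> c (p + t *\<^sub>R (q1 - p)) w - phi \<nu> c (p + t *\<^sub>R (q1 - p)) v" for w t
    have gform: "g w t = (phi \<nu> c p w - phi \<nu> c p v) + t * ((phi \<nu> c q1 w - phi \<nu> c q1 v) - (phi \<nu> c p w - phi \<nu> c p v))" for w t
      unfolding g_def phi_def by (simp add: inner_add_left inner_diff_left algebra_simps)
    have ev: "\<forall>\<^sub>F t in at_right 0. g w t > 0" if w: "w \<in> supp c - A0" for w
    proof -
      have pos: "phi \<nu> c p w - phi \<nu> c p v > 0"
        using Amin_gt[of v \<nu> c p w] w v A0_def by auto
      have "((\<lambda>t. (phi \<nu> c p w - phi \<nu> c p v) + t * ((phi \<nu> c q1 w - phi \<nu> c q1 v) - (phi \<nu> c p w - phi \<nu> c p v)))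
          \<longlongrightarrow> (phi \<nu> c p w - phi \<nu> c p v) + 0 * ((phi \<nu> c q1 w - phi \<nu> c q1 v) - (phi \<nu> c p w - phi \<nu> c p v))) (at_right 0)"
        by (intro tendsto_intros)
      then have "((\<lambda>t. g w t) \<longlongrightarrow> (phi \<nu> c p w - phi \<nu> c p v)) (at_right 0)"
        unfolding gform by simp
      from order_tendstoD(1)[OF this pos] show ?thesis .
    qed
    have "\<forall>\<^sub>F t in at_right 0. (\<forall>w\<in>supp c - A0. g w t > 0) \<and> 0 < t"
    proof (rule eventually_conj)
      show "\<forall>\<^sub>F t in at_right 0. \<forall>w\<in>supp c - A0. g w t > 0"
        using fin ev by (intro eventually_ball_finite) auto
      show "\<forall>\<^sub>F t in at_right 0. 0 < (t::real)" by (rule eventually_at_right_less)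
    qed
    then obtain t where t: "\<forall>w\<in>supp c - A0. g w t > 0" "0 < t"
      using eventually_happens[of _ "at_right (0::real)"] trivial_limit_at_right_real by blast
    define pt where "pt = p + t *\<^sub>R (q1 - p)"
    have gpt: "g w t = phi \<nu> c pt w - phi \<nu> c pt v" for w unfolding g_def pt_def by simp
    have eqA0: "phi \<nu> c pt w = phi \<nu> c pt v" if "w \<in> A0" for w
      using gform[of w t] gpt[of w] that q1 pL0 unfolding L0_def by simp
    have "Amin \<nu> c pt = A0"
    proof
      show "Amin \<nu> c pt \<subseteq> A0"
      proof
        fix w assume w: "w \<in> Amin \<nu> c pt"
        show "w \<in> A0"
        proof (rule ccontr)
          assume "w \<notin> A0"
          then have "g w t > 0" using t w Amin_sub by blast
          moreover have "phi \<nu> c pt w \<le> phi \<nu> c pt v" using w vsupp unfolding Amin_def by auto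
          ultimately show False using gpt by simp
        qed
      qed
    next
      show "A0 \<subseteq> Amin \<nu> c pt"
      proof
        fix w assume w: "w \<in> A0"
        have "phi \<nu> c pt w \<le> phi \<nu> c pt w'" if w': "w' \<in> supp c" for w'
        proof (cases "w' \<in> A0")
          case True then show ?thesis using eqA0 w by simp
        next
          case False
          then have "w' \<in> supp c - A0" using w' by blast
          then have "g w' t > 0" using t(1) by blast
          then show ?thesis using gpt eqA0[OF w] by simp
        qed
        then show "w \<in> Amin \<nu> c pt" using w A0supp unfolding Amin_def by auto
      qed
    qed
    then have ptC: "pt \<in> C" using CA0 by simp
    have "q1 = (1 - 1 / t) *\<^sub>R p + (1 / t) *\<^sub>R pt"
      unfolding pt_def using t(2) by (simp add: vec_eq_iff field_simps)
    moreover have "(1 - 1 / t) *\<^sub>R p + (1 / t) *\<^sub>R pt \<in> affine hull C"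
      using mem_affine[OF affine_affine_hull hull_inc[OF pC] hull_inc[OF ptC], of "1 - 1 / t" "1 / t"]
      by simp
    moreover have "affine hull C \<subseteq> affine hull Phat"
      using PhatC closure_subset[of C] by (simp add: hull_mono)
    ultimately show "q1 \<in> affine hull Phat" by auto
  qed
  have affPhat: "affine hull Phat = L0" using aff1 aff2 by blast
  have PhatL0: "Phat \<subseteq> L0" using aff1 hull_subset[of Phat affine] by blast
  have qL0: "q \<in> L0" using q affPhat by simp

  obtain dd where dd: "\<forall>w\<in>supp c. (\<Sum>i\<in>UNIV. w$i) = dd" using hom unfolding homogeneous_poly_def by blast
  have sum0: "(\<Sum>i\<in>UNIV. (rvec w1 - rvec w2) $ i) = 0" if "w1 \<in> supp c" "w2 \<in> supp c" for w1 w2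
  proof -
    have "(\<Sum>i\<in>UNIV. rvec w1 $ i) = real (\<Sum>i\<in>UNIV. w1 $ i)" by (simp add: rvec_def)
    moreover have "(\<Sum>i\<in>UNIV. rvec w2 $ i) = real (\<Sum>i\<in>UNIV. w2 $ i)" by (simp add: rvec_def)
    ultimately show ?thesis using dd that by (simp add: sum_subtractf)
  qed
  have phidiff: "phi \<nu> c r w1 - phi \<nu> c r w2 = \<nu> (c w1) - \<nu> (c w2) + proj r \<bullet> (\<chi> i. (rvec w2 - rvec w1) $ Some i)"
    if "w1 \<in> supp c" "w2 \<in> supp c" for r w1 w2
  proof -
    have "r \<bullet> (rvec w2 - rvec w1) = proj r \<bullet> (\<chi> i. (rvec w2 - rvec w1) $ Some i)"
      by (rule proj_inner) (rule sum0[OF that(2) that(1)])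
    then show ?thesis unfolding phi_def by (simp add: inner_diff_right)
  qed
  define f where "f x = phi \<nu> c x u - phi \<nu> c x v" for x
  define a' where "a' = (\<chi> i. (rvec v - rvec u) $ Some i)"
  define l0 where "l0 y = y \<bullet> a'" for y
  have linl0: "linear l0" unfolding l0_def linear_conv_bounded_linear by (rule bounded_linear_inner_left)
  have fform: "f x = \<nu> (c u) - \<nu> (c v) + l0 (proj x)" for x
    unfolding f_def l0_def a'_def using phidiff[OF u_supp vsupp] by simp
  have fdiff: "f x - f y = l0 (proj x - proj y)" for x y
    using fform[of x] fform[of y] linear_diff[OF linl0] by simp
  have a'int: "a' \<in> int_vecs" unfolding a'_def by (simp add: int_vecs_iff rvec_def)
  have l0int: "l0 x \<in> \<int>" if "x \<in> int_vecs" for x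
    unfolding l0_def using that a'int by (rule int_vecs_inner)

  obtain r0 where r0: "Amin \<nu> c r0 = insert u A0" using simplex A0_def by blast
  have r0L0: "r0 \<in> L0" unfolding L0_def using r0 vA0 Amin_phi_eq[of _ \<nu> c r0] by auto
  have fr0: "f r0 = 0" unfolding f_def using r0 vA0 Amin_phi_eq[of u \<nu> c r0 v] by auto
  have fp: "f p > 0" unfolding f_def using Amin_gt[OF v u_supp u_notin] by simp
  have fPhat: "f x \<ge> 0" if "x \<in> Phat" for x
  proof -
    have "C \<subseteq> {x. phi \<nu> c x v \<le> phi \<nu> c x u}"
      using CA0 vA0 u_supp unfolding Amin_def by auto
    moreover have "closed {x. phi \<nu> c x v \<le> phi \<nu> c x u}"
      unfolding phi_def by (intro closed_Collect_le continuous_intros)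
    ultimately have "Phat \<subseteq> {x. phi \<nu> c x v \<le> phi \<nu> c x u}"
      using PhatC closure_minimal by blast
    then show ?thesis using that f_def by auto
  qed
  have fL0v': "phi \<nu> c x v' = phi \<nu> c x v" if "x \<in> L0" for x using that v'A0 L0_def by auto

  define P where "P = proj ` Phat"
  define Q where "Q = affine hull P \<inter> proj ` {r. phi \<nu> c r u = phi \<nu> c r v'}"
  have affP: "affine hull P = proj ` L0"
    unfolding P_def affPhat[symmetric]
    using affine_hull_linear_image[of proj Phat] linear_proj linear_conv_bounded_linear by auto
  have Qchar: "\<exists>r\<in>L0. y = proj r \<and> f r = 0" if y: "y \<in> Q" for y
  proof -
    obtain r' where r': "r' \<in> L0" "y = proj r'" using y affP Q_def by auto
    obtain r where r: "y = proj r" "phi \<nu> c r u = phi \<nu> c r v'" using y Q_def by auto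
    have v'supp: "v' \<in> supp c" using v'A0 A0supp by auto
    have "phi \<nu> c r' u - phi \<nu> c r' v' = phi \<nu> c r u - phi \<nu> c r v'"
      using phidiff[OF u_supp v'supp, of r'] phidiff[OF u_supp v'supp, of r] r r' by simp
    then have "f r' = 0" using r fL0v'[OF r'(1)] f_def by simp
    with r' show ?thesis by blast
  qed
  have Qmem: "proj r \<in> Q" if "r \<in> L0" "f r = 0" for r
    unfolding Q_def affP using that fL0v'[OF that(1)] f_def by auto
  have r0Q: "proj r0 \<in> Q" using Qmem[OF r0L0 fr0] .

  define DS where "DS = {proj q1 - proj r0 | q1. q1 \<in> L0}"
  have subDS: "subspace DS"
    unfolding subspace_def
  proof (intro conjI ballI allI)
    show "0 \<in> DS" unfolding DS_def using r0L0 by auto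
  next
    fix x y assume "x \<in> DS" "y \<in> DS"
    then obtain q1 q2 where "q1 \<in> L0" "q2 \<in> L0" "x = proj q1 - proj r0" "y = proj q2 - proj r0"
      unfolding DS_def by auto
    moreover have "q1 + q2 - r0 \<in> L0" using lin3L0 calculation(1,2) r0L0 by blast
    ultimately show "x + y \<in> DS" unfolding DS_def
      by (auto intro!: exI[of _ "q1 + q2 - r0"] simp: proj_add proj_diff)
  next
    fix t :: real and x assume "x \<in> DS"
    then obtain q1 where q1: "q1 \<in> L0" "x = proj q1 - proj r0" unfolding DS_def by auto
    have "t *\<^sub>R q1 + (1 - t) *\<^sub>R r0 \<in> L0" using mem_affine[OF affL0 q1(1) r0L0] by simp
    moreover have "t *\<^sub>R x = proj (t *\<^sub>R q1 + (1 - t) *\<^sub>R r0) - proj r0"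
      unfolding q1(2) proj_add proj_scale by (simp add: algebra_simps)
    ultimately show "t *\<^sub>R x \<in> DS" unfolding DS_def by blast
  qed
  have spanP: "\<exists>q1\<in>L0. x = proj q1 - proj r0" if "x \<in> span {a - b |a b. a \<in> P \<and> b \<in> P}" for x
  proof -
    have "{a - b |a b. a \<in> P \<and> b \<in> P} \<subseteq> DS"
    proof
      fix y assume "y \<in> {a - b |a b. a \<in> P \<and> b \<in> P}"
      then obtain q1 q2 where "q1 \<in> Phat" "q2 \<in> Phat" "y = proj q1 - proj q2" unfolding P_def by auto
      moreover then have "q1 + r0 - q2 \<in> L0" using lin3L0 PhatL0 r0L0 by blast
      ultimately show "y \<in> DS" unfolding DS_def
        by (auto intro!: exI[of _ "q1 + r0 - q2"] simp: proj_add proj_diff)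
    qed
    then have "span {a - b |a b. a \<in> P \<and> b \<in> P} \<subseteq> DS" using subDS by (rule span_minimal)
    then show ?thesis using that DS_def by auto
  qed
  have spanP2: "proj q1 - proj q2 \<in> span {a - b |a b. a \<in> P \<and> b \<in> P}" if hq1: "q1 \<in> L0" and hq2: "q2 \<in> L0" for q1 q2
  proof -
    have ppP: "proj p \<in> P" using pPhat P_def by auto
    have ah: "affine hull P = {proj p + w |w. w \<in> span {x - proj p |x. x \<in> P - {proj p}}}"
      by (rule affine_hull_span[OF ppP])
    have sm: "span {x - proj p |x. x \<in> P - {proj p}} \<subseteq> span {a - b |a b. a \<in> P \<and> b \<in> P}"
      using ppP by (intro span_mono) auto
    obtain w1 where w1: "proj q1 = proj p + w1" "w1 \<in> span {x - proj p |x. x \<in> P - {proj p}}"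
    proof -
      have "proj q1 \<in> affine hull P" using hq1 affP by auto
      then show ?thesis using that unfolding ah by blast
    qed
    obtain w2 where w2: "proj q2 = proj p + w2" "w2 \<in> span {x - proj p |x. x \<in> P - {proj p}}"
    proof -
      have "proj q2 \<in> affine hull P" using hq2 affP by auto
      then show ?thesis using that unfolding ah by blast
    qed
    have "proj q1 - proj q2 = w1 - w2" using w1 w2 by simp
    then show ?thesis using w1(2) w2(2) sm by (auto intro: span_diff)
  qed

  obtain z where zI: "z \<in> int_vecs" and zA0: "\<And>w. w \<in> A0 \<Longrightarrow> z \<bullet> (rvec w - rvec v) = 0"
      and za: "z \<bullet> (rvec v - rvec u) = 1"
  proof -
    have uAr0: "u \<in> Amin \<nu> c r0" using r0 by simp
    obtain q' where q': "Amin \<nu> c r0 \<subseteq> Amin \<nu> c q'"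
        "affine hull (rvec ` Amin \<nu> c q') = affine hull (rvec ` supp c)"
      using exists_max_cell[OF fin uAr0] by blast
    define M where "M = Amin \<nu> c q'"
    have uM: "u \<in> M" and A0M: "A0 \<subseteq> M" using q'(1) r0 M_def by auto
    have vM: "v \<in> M" using A0M vA0 by auto
    have Msupp: "M \<subseteq> supp c" using Amin_sub M_def by blast
    have finM: "finite M" using fin Msupp finite_subset by blast
    have nad: "\<not> affine_dependent (rvec ` M)" using smooth unfolding smooth_trop_def M_def by blast
    have sat: "span {a - b |a b. a \<in> rvec ` supp c \<and> b \<in> rvec ` supp c} \<inter> int_vecs
        \<subseteq> int_comb ((\<lambda>w. rvec w - rvec v) ` M)"
      using smooth vM q'(2) unfolding smooth_trop_def M_def by blast
    define B where "B = (+) (- rvec v) ` (rvec ` M - {rvec v})"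
    have indB: "independent B"
      using nad affine_dependent_iff_dependent2[of "rvec v" "rvec ` M"] vM B_def by auto
    have finB: "finite B" using finM B_def by simp
    have Bint: "B \<subseteq> int_vecs" unfolding B_def by (auto simp: int_vecs_iff rvec_def)
    have imgeq: "(\<lambda>w. rvec w - rvec v) ` M = insert 0 B"
    proof
      show "(\<lambda>w. rvec w - rvec v) ` M \<subseteq> insert 0 B"
      proof
        fix x assume "x \<in> (\<lambda>w. rvec w - rvec v) ` M"
        then obtain w where w: "w \<in> M" "x = rvec w - rvec v" by auto
        show "x \<in> insert 0 B"
        proof (cases "w = v")
          case True then show ?thesis using w by simp
        next
          case False
          then have "rvec w \<noteq> rvec v" using rvec_inj by blast
          then have "rvec w \<in> rvec ` M - {rvec v}" using w by auto
          then have "- rvec v + rvec w \<in> B" unfolding B_def by blast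
          then show ?thesis using w by simp
        qed
      qed
    next
      show "insert 0 B \<subseteq> (\<lambda>w. rvec w - rvec v) ` M"
      proof
        fix x assume "x \<in> insert 0 B"
        then show "x \<in> (\<lambda>w. rvec w - rvec v) ` M"
        proof
          assume "x = 0" then show ?thesis using vM by (auto intro!: image_eqI[of _ _ v])
        next
          assume "x \<in> B"
          then obtain w where "w \<in> M" "x = - rvec v + rvec w" unfolding B_def by auto
          then show ?thesis by (auto intro!: image_eqI[of _ _ w])
        qed
      qed
    qed
    have spanB: "span B \<subseteq> span {a - b |a b. a \<in> rvec ` supp c \<and> b \<in> rvec ` supp c}"
    proof (rule span_mono)
      show "B \<subseteq> {a - b |a b. a \<in> rvec ` supp c \<and> b \<in> rvec ` supp c}"
      proof
        fix x assume "x \<in> B"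
        then obtain w where w: "w \<in> M" "x = - rvec v + rvec w" unfolding B_def by auto
        then have "x = rvec w - rvec v" by simp
        moreover have "rvec w \<in> rvec ` supp c" "rvec v \<in> rvec ` supp c" using w Msupp vM by auto
        ultimately show "x \<in> {a - b |a b. a \<in> rvec ` supp c \<and> b \<in> rvec ` supp c}" by blast
      qed
    qed
    have ic: "int_comb ((\<lambda>w. rvec w - rvec v) ` M) \<subseteq> int_comb B"
      unfolding imgeq by (rule int_comb_insert0[OF finB])
    have "span B \<inter> int_vecs \<subseteq> span {a - b |a b. a \<in> rvec ` supp c \<and> b \<in> rvec ` supp c} \<inter> int_vecs"
      using spanB by (rule Int_mono) simp
    then have satB: "span B \<inter> int_vecs \<subseteq> int_comb B"
      using sat ic by (meson subset_trans)
    have "u \<noteq> v" using uA0 vA0 by blast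
    then have "rvec u \<noteq> rvec v" using rvec_inj by blast
    then have bB: "- rvec v + rvec u \<in> B" unfolding B_def using uM by blast
    obtain z0 where z0: "z0 \<in> int_vecs" "z0 \<bullet> (- rvec v + rvec u) = 1"
        "\<forall>b'\<in>B - {- rvec v + rvec u}. z0 \<bullet> b' = 0"
      using dual_basis[OF finB indB Bint satB bB] by blast
    show ?thesis
    proof (rule that[of "- z0"])
      show "- z0 \<in> int_vecs" using z0(1) by (simp add: int_vecs_iff)
      show "- z0 \<bullet> (rvec v - rvec u) = 1" using z0(2) by (simp add: inner_diff_right inner_add_right)
      fix w assume w: "w \<in> A0"
      show "- z0 \<bullet> (rvec w - rvec v) = 0"
      proof (cases "w = v")
        case True then show ?thesis by simp
      next
        case False
        then have "rvec w \<noteq> rvec v" using rvec_inj by blast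
        then have "- rvec v + rvec w \<in> B" unfolding B_def using w A0M by blast
        moreover have "w \<noteq> u" using w uA0 by blast
        then have "- rvec v + rvec w \<noteq> - rvec v + rvec u" using rvec_inj by auto
        ultimately have "z0 \<bullet> (- rvec v + rvec w) = 0" using z0(3) by blast
        then show ?thesis by (simp add: inner_add_right inner_diff_right)
      qed
    qed
  qed
  have pzL0: "p + z \<in> L0"
  proof -
    have "phi \<nu> c (p + z) w = phi \<nu> c (p + z) v" if "w \<in> A0" for w
    proof -
      have "phi \<nu> c (p + z) w = phi \<nu> c p w - z \<bullet> rvec w" using phi_shift[of \<nu> c p 1 z w] by simp
      moreover have "phi \<nu> c (p + z) v = phi \<nu> c p v - z \<bullet> rvec v" using phi_shift[of \<nu> c p 1 z v] by simp
      moreover have "phi \<nu> c p w = phi \<nu> c p v" using pL0 that L0_def by auto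
      ultimately show ?thesis using zA0[OF that] by (simp add: inner_diff_right)
    qed
    then show ?thesis unfolding L0_def by blast
  qed
  define x1 where "x1 = proj z"
  have x1eq: "x1 = proj (p + z) - proj p" unfolding x1_def by (simp add: proj_add)
  have x1D: "x1 \<in> dir_lattice P"
    unfolding dir_lattice_def x1_def using spanP2[OF pzL0 pL0] proj_int[OF zI] x1eq x1_def by auto
  have l0x1: "l0 x1 = 1"
  proof -
    have "f (p + z) - f p = l0 x1" using fdiff x1eq by simp
    moreover have "f (p + z) - f p = z \<bullet> (rvec v - rvec u)"
      unfolding f_def using phi_shift[of \<nu> c p 1 z] by (simp add: inner_diff_right)
    ultimately show ?thesis using za by simp
  qed

  have exist: "primitive_inward_normal P Q l0 \<and> (\<forall>y\<in>Q. f q = l0 (proj q - y))"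
    unfolding primitive_inward_normal_def
  proof (intro conjI ballI)
    show "linear l0" by (rule linl0)
  next
    fix x assume "x \<in> dir_lattice P" then show "l0 x \<in> \<int>" using l0int dir_lattice_def by auto
  next
    show "\<exists>x\<in>dir_lattice P. l0 x = 1" using x1D l0x1 by blast
  next
    fix x y assume "x \<in> Q" "y \<in> Q"
    then obtain r1 r2 where "r1 \<in> L0" "x = proj r1" "f r1 = 0" "r2 \<in> L0" "y = proj r2" "f r2 = 0"
      using Qchar by metis
    then show "l0 (x - y) = 0" using fdiff[of r1 r2] by simp
  next
    fix x y assume "x \<in> P" "y \<in> Q"
    then obtain q1 r1 where "q1 \<in> Phat" "x = proj q1" "y = proj r1" "f r1 = 0"
      using Qchar P_def by blast
    then show "0 \<le> l0 (x - y)" using fdiff[of q1 r1] fPhat by fastforce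
  next
    show "\<exists>x\<in>P. \<exists>y\<in>Q. 0 < l0 (x - y)"
      using pPhat P_def r0Q fdiff[of p r0] fr0 fp by force
  next
    fix y assume "y \<in> Q"
    then obtain r1 where "y = proj r1" "f r1 = 0" using Qchar by blast
    then show "f q = l0 (proj q - y)" using fdiff[of q r1] by simp
  qed

  have uniq: "d = f q" if hd: "\<exists>l. primitive_inward_normal P Q l \<and> (\<forall>y\<in>Q. d = l (proj q - y))" for d
  proof -
    obtain l where l: "primitive_inward_normal P Q l" and dl: "\<forall>y\<in>Q. d = l (proj q - y)"
      using hd by blast
    have linl: "linear l" using l primitive_inward_normal_def by blast
    define mu where "mu = l (proj p - proj r0) / f p"
    have key: "l (proj q1 - proj r0) = mu * f q1" if q1: "q1 \<in> L0" for q1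
    proof -
      define s where "s = f q1 / f p"
      define qq where "qq = q1 + (s *\<^sub>R r0 + (1 - s) *\<^sub>R p) - p"
      have m: "s *\<^sub>R r0 + (1 - s) *\<^sub>R p \<in> L0" using mem_affine[OF affL0 r0L0 pL0] by simp
      have qqL0: "qq \<in> L0" unfolding qq_def using lin3L0[OF q1 m pL0] .
      have "f qq = f q1 + (s * f r0 + (1 - s) * f p) - f p"
        unfolding qq_def f_def phi_lin3 phi_comb2[of s "1 - s", simplified] by (simp add: algebra_simps)
      also have "\<dots> = 0" using fr0 fp unfolding s_def by (simp add: field_simps)
      finally have "proj qq \<in> Q" using Qmem[OF qqL0] by simp
      then have "l (proj qq - proj r0) = 0" using l r0Q unfolding primitive_inward_normal_def by blast
      moreover have "proj qq - proj r0 = (proj q1 - proj r0) - s *\<^sub>R (proj p - proj r0)"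
        unfolding qq_def by (simp add: proj_add proj_diff proj_scale algebra_simps)
      ultimately have "l (proj q1 - proj r0) = s * l (proj p - proj r0)"
        using linear_diff[OF linl] linear_scale[OF linl] by (metis eq_iff_diff_eq_0 real_scaleR_def)
      then show ?thesis unfolding mu_def s_def using fp by (simp add: field_simps)
    qed
    have lx: "l (proj q1 - proj q2) = mu * (f q1 - f q2)" if "q1 \<in> L0" "q2 \<in> L0" for q1 q2
    proof -
      have "proj q1 - proj q2 = (proj q1 - proj r0) - (proj q2 - proj r0)" by simp
      then have "l (proj q1 - proj q2) = l (proj q1 - proj r0) - l (proj q2 - proj r0)"
        using linear_diff[OF linl] by metis
      then show ?thesis using key that by (simp add: right_diff_distrib)
    qed
    have mupos: "mu > 0"
    proof -
      obtain x y where xy: "x \<in> P" "y \<in> Q" "0 < l (x - y)"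
        using l unfolding primitive_inward_normal_def by blast
      obtain q1 where q1: "q1 \<in> Phat" "x = proj q1" using xy P_def by auto
      obtain r1 where r1: "r1 \<in> L0" "y = proj r1" "f r1 = 0" using Qchar xy by blast
      have "0 < mu * f q1" using xy q1 r1 lx[of q1 r1] PhatL0 by auto
      moreover have "f q1 \<ge> 0" using fPhat q1 by auto
      ultimately show ?thesis by (metis mult_nonpos_nonneg not_le)
    qed
    have mu1: "mu \<ge> 1"
    proof -
      have "l x1 \<in> \<int>" using l x1D unfolding primitive_inward_normal_def by blast
      moreover have "l x1 = mu" using lx[OF pzL0 pL0] x1eq fdiff l0x1 by simp
      ultimately obtain k where k: "mu = of_int k" by (metis Ints_cases)
      then have "k > 0" using mupos by simp
      then show ?thesis using k by simp
    qed
    have mu2: "mu \<le> 1"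
    proof -
      obtain x where x: "x \<in> dir_lattice P" "l x = 1"
        using l unfolding primitive_inward_normal_def by blast
      obtain q1 where q1: "q1 \<in> L0" "x = proj q1 - proj r0" using spanP x(1) dir_lattice_def by blast
      have "l0 x \<in> \<int>" using x(1) l0int dir_lattice_def by auto
      moreover have "l0 x = f q1" using fdiff[of q1 r0] fr0 q1 by simp
      ultimately obtain k where k: "f q1 = of_int k" by (metis Ints_cases)
      have m1: "mu * f q1 = 1" using key[OF q1(1)] x q1 by simp
      then have "f q1 > 0" using zero_less_mult_pos[of mu "f q1"] mupos by simp
      then have "f q1 \<ge> 1" using k by simp
      then have "mu * 1 \<le> mu * f q1" using mupos by (intro mult_left_mono) auto
      then show ?thesis using m1 by simp
    qed
    have "mu = 1" using mu1 mu2 by simp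
    then show ?thesis using dl r0Q key[OF qL0] by simp
  qed

  have "lattice_dist P Q (proj q) = f q"
    unfolding lattice_dist_def
  proof (rule the_equality)
    show "\<exists>l. primitive_inward_normal P Q l \<and> (\<forall>y\<in>Q. f q = l (proj q - y))" using exist by blast
  next
    fix d assume "\<exists>l. primitive_inward_normal P Q l \<and> (\<forall>y\<in>Q. d = l (proj q - y))"
    then show "d = f q" by (rule uniq)
  qed
  then show ?thesis unfolding P_def Q_def f_def .
qed


end
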